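(* Let $\mathcal{R}$ be a finite valuation ring of order $q^r$, where $q$ is a power of an odd prime. There is an absolute-type constant $C>0$, depending only on $n$, such that for every integer $n>1$ and every set $\mathcal{A}\subset\mathcal{R}$ with $|\mathcal{A}|\ge 2q^{r-1}$, \[\max\left\{ |n\mathcal{A}^2|,\ |\mathcal{A}+\mathcal{A}|\right\}\ \ge\ C\min\left\{ q^{\frac{r}{n}}|\mathcal{A}|^{\frac{n-1}{n}},\ \frac{|\mathcal{A}|^{\frac{3n-2}{n}}}{q^{\frac{(n-1)(2r-1)}{n}}}\right\}.\]
   Context: A finite valuation ring is a finite, local, principal commutative ring with identity. Its unique maximal ideal is $(z)$ for a uniformizer $z$; the residue field $\mathcal{R}/(z)$ has $q$ elements; $r$ is the smallest positive integer with $z^r=0$; then $|\mathcal{R}|=q^r$ and $|(z)|=q^{r-1}$. For $\mathcal{A}\subset\mathcal{R}$: $\mathcal{A}+\mathcal{A}=\{a+b: a,b\in\mathcal{A}\}$, $\mathcal{A}^2=\{x^2: x\in\mathcal{A}\}$, and for a positive integer $n$, $n\mathcal{A}^2$ is the set of all sums $a_1+\cdots+a_n$ with $a_1,\dots,a_n\in\mathcal{A}^2$. *)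

theory Defs
  imports "HOL-Algebra.Algebra" "HOL-Computational_Algebra.Primes"
begin

definition finite_valuation_ring :: "('a, 'b) ring_scheme \<Rightarrow> bool" where
  "finite_valuation_ring R \<longleftrightarrow>
     cring R \<and> finite (carrier R) \<and>
     (\<exists>!M. maximalideal M R) \<and>
     (\<forall>I. ideal I R \<longrightarrow> principalideal I R)"

definition ring_sumset :: "('a, 'b) ring_scheme \<Rightarrow> 'a set \<Rightarrow> 'a set" where
  "ring_sumset R A = {a \<oplus>\<^bsub>R\<^esub> b | a b. a \<in> A \<and> b \<in> A}"

definition sq_sumset :: "('a, 'b) ring_scheme \<Rightarrow> nat \<Rightarrow> 'a set \<Rightarrow> 'a set" where
  "sq_sumset R n A =
     {finsum R (\<lambda>i. f i \<otimes>\<^bsub>R\<^esub> f i) {..<n} | f. f \<in> {..<n} \<rightarrow> A}"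

end

theory Submission
  imports Defs Complex_Main
begin

locale fvr = cring R for R (structure) +
  fixes M z
  assumes fin: "finite (carrier R)"
  and Mmax: "maximalideal M R"
  and Muniq: "\<And>M'. maximalideal M' R \<Longrightarrow> M' = M"
  and zc: "z \<in> carrier R" and Mz: "M = PIdl z"
begin

lemma M_ideal: "ideal M R" using Mmax maximalideal.axioms(1) by blast
lemma M_sub: "M \<subseteq> carrier R" using ideal.Icarr[OF M_ideal] by blast
lemma M_ne: "M \<noteq> carrier R" using maximalideal.I_notcarr[OF Mmax] by simp
lemma one_notin_M: "\<one> \<notin> M" using ideal.one_imp_carrier[OF M_ideal] M_ne by blast

lemma ideal_in_M:
  assumes "ideal I R" "I \<noteq> carrier R" shows "I \<subseteq> M"
proof -
  define S where "S = {J. ideal J R \<and> I \<subseteq> J \<and> J \<noteq> carrier R}"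
  have Ssub: "S \<subseteq> Pow (carrier R)" unfolding S_def
    using ideal.Icarr by fast
  have finS: "finite S" by (rule finite_subset[OF Ssub]) (simp add: fin)
  have IS: "I \<in> S" using assms unfolding S_def by auto
  have ne: "card ` S \<noteq> {}" using IS by auto
  have "Max (card ` S) \<in> card ` S" using Max_in[OF _ ne] finS by auto
  then obtain J where JS: "J \<in> S" and Jm: "card J = Max (card ` S)" by auto
  have Jmax: "\<And>J'. J' \<in> S \<Longrightarrow> card J' \<le> card J" using Jm finS by simp
  have "maximalideal J R"
  proof (rule maximalidealI)
    show "ideal J R" using JS S_def by auto
    show "carrier R \<noteq> J" using JS S_def by auto
    fix J' assume J': "ideal J' R" "J \<subseteq> J'" "J' \<subseteq> carrier R"
    show "J' = J \<or> J' = carrier R"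
    proof (cases "J' = carrier R")
      case False
      then have "J' \<in> S" using J' JS unfolding S_def by auto
      then have "card J' \<le> card J" by (rule Jmax)
      moreover have "finite J'" using J'(3) fin finite_subset by blast
      ultimately have "J' = J" using J'(2) card_seteq[of J' J] by simp
      then show ?thesis by simp
    qed simp
  qed
  then have "J = M" by (rule Muniq)
  then show ?thesis using JS S_def by auto
qed

lemma nonunit_in_M: assumes "x \<in> carrier R" "x \<notin> Units R" shows "x \<in> M"
proof -
  have id: "ideal (PIdl x) R" by (rule cgenideal_ideal[OF assms(1)])
  have "PIdl x \<noteq> carrier R"
  proof
    assume "PIdl x = carrier R"
    then have "\<one> \<in> PIdl x" by simp
    then obtain y where y: "y \<in> carrier R" "\<one> = y \<otimes> x" unfolding cgenideal_def by auto
    have "x \<otimes> y = \<one>" using y assms(1) m_comm[of y x] by simp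
    then have "x \<in> Units R" unfolding Units_def using y assms(1) by force
    then show False using assms by simp
  qed
  then have "PIdl x \<subseteq> M" using ideal_in_M id by blast
  then show ?thesis using cgenideal_self[OF assms(1)] by blast
qed

lemma unit_notin_M: assumes "x \<in> Units R" shows "x \<notin> M"
proof
  assume "x \<in> M"
  then have "inv x \<otimes> x \<in> M" using ideal.I_l_closed[OF M_ideal] Units_inv_closed[OF assms] Units_closed by blast
  then show False using assms one_notin_M Units_l_inv[OF assms] by simp
qed

lemma notM_unit: "x \<in> carrier R \<Longrightarrow> x \<notin> M \<Longrightarrow> x \<in> Units R"
  using nonunit_in_M by blast

lemma unit_cancel_zero: assumes "u \<in> Units R" "v \<in> carrier R" "u \<otimes> v = \<zero>" shows "v = \<zero>"
proof -
  have "u \<otimes> v = u \<otimes> \<zero>" using assms Units_closed[OF assms(1)] by simp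
  then show ?thesis using Units_l_cancel[OF assms(1) assms(2) zero_closed] by simp
qed

end

context fvr begin

definition Ip :: "nat \<Rightarrow> 'a set" where
  "Ip k = {z [^] k \<otimes> x | x. x \<in> carrier R}"

definition Kz :: "'a set" where "Kz = {y \<in> carrier R. z \<otimes> y = \<zero>}"

lemma zpow_M: fixes k :: nat shows "k \<ge> 1 \<Longrightarrow> z [^] k \<in> M"
proof -
  assume "k \<ge> 1"
  then obtain j where k: "k = Suc j" by (cases k) auto
  have "z [^] k = z [^] j \<otimes> z" unfolding k using zc by simp
  then show ?thesis unfolding Mz cgenideal_def using zc by auto
qed

lemma zpow_nil: "\<exists>k::nat>0. z [^] k = \<zero>"
proof -
  let ?f = "\<lambda>k::nat. z [^] k"
  let ?S = "{..card (carrier R)}"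
  have sub: "?f ` ?S \<subseteq> carrier R" using zc by auto
  have le: "card (?f ` ?S) \<le> card (carrier R)" by (rule card_mono[OF fin sub])
  have "\<not> inj_on ?f ?S"
  proof
    assume "inj_on ?f ?S"
    then have "card (?f ` ?S) = card ?S" by (rule card_image)
    then show False using le by simp
  qed
  then obtain a b :: nat where ab: "a \<noteq> b" "z [^] a = z [^] b"
    unfolding inj_on_def by blast
  define i where "i = min a b"
  define j where "j = max a b"
  have ij: "i < j" "z [^] i = z [^] j" using ab unfolding i_def j_def by (auto simp: min_def max_def)
  define d :: nat where "d = j - i"
  have d1: "d \<ge> 1" using ij d_def by auto
  have jid: "j = i + d" using ij d_def by simp
  have zi: "z [^] i \<in> carrier R" and zd: "z [^] d \<in> carrier R" using zc by auto
  have "z [^] j = z [^] i \<otimes> z [^] d" unfolding jid using zc by (simp add: nat_pow_mult)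
  then have zz: "z [^] i = z [^] i \<otimes> z [^] d" using ij by simp
  have "z [^] i \<otimes> (\<one> \<ominus> z [^] d) = z [^] i \<ominus> z [^] i \<otimes> z [^] d" using zi zd by algebra
  also have "\<dots> = \<zero>" using zz zi by (simp add: r_neg)
  finally have eq: "(\<one> \<ominus> z [^] d) \<otimes> z [^] i = \<zero>" using zi zd m_comm by simp
  have "\<one> \<ominus> z [^] d \<notin> M"
  proof
    assume a: "\<one> \<ominus> z [^] d \<in> M"
    have "(\<one> \<ominus> z [^] d) \<oplus> z [^] d \<in> M"
      using a zpow_M[OF d1] additive_subgroup.a_closed[OF ideal.axioms(1)[OF M_ideal]] by blast
    moreover have "(\<one> \<ominus> z [^] d) \<oplus> z [^] d = \<one>" using zd by algebra
    ultimately show False using one_notin_M by simp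
  qed
  then have "\<one> \<ominus> z [^] d \<in> Units R" using notM_unit zd by simp
  then have "z [^] i = \<zero>" using unit_cancel_zero eq zi by blast
  then have "z [^] Suc i = \<zero>" using zc by simp
  then show ?thesis by blast
qed

end

context fvr begin

definition rr :: nat where "rr = (LEAST k::nat. k > 0 \<and> z [^] k = \<zero>)"

lemma rr_prop: "rr > 0 \<and> z [^] rr = \<zero>"
  unfolding rr_def using LeastI_ex[OF zpow_nil] by simp

lemma rr_min: "0 < k \<Longrightarrow> k < rr \<Longrightarrow> z [^] k \<noteq> \<zero>"
  unfolding rr_def using not_less_Least by blast

lemma Ip_sub: "Ip k \<subseteq> carrier R" unfolding Ip_def using zc by auto

lemma Ip0: "Ip 0 = carrier R"
  unfolding Ip_def
proof auto
  fix x assume "x \<in> carrier R"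
  then show "\<exists>xa. x = \<one> \<otimes> xa \<and> xa \<in> carrier R" by (intro exI[of _ x]) simp
qed

lemma Ip1: "Ip 1 = M"
proof -
  have e: "\<And>x. x \<in> carrier R \<Longrightarrow> z [^] (1::nat) \<otimes> x = x \<otimes> z" using zc m_comm by simp
  show ?thesis
  proof
    show "Ip 1 \<subseteq> M" unfolding Ip_def Mz cgenideal_def using e by auto
    show "M \<subseteq> Ip 1"
    proof
      fix a assume "a \<in> M"
      then obtain x where x: "x \<in> carrier R" "a = x \<otimes> z" unfolding Mz cgenideal_def by auto
      then have "a = z [^] (1::nat) \<otimes> x" using e by simp
      then show "a \<in> Ip 1" unfolding Ip_def using x by auto
    qed
  qed
qed

lemma Ip_rr: "Ip rr = {\<zero>}"
  unfolding Ip_def using rr_prop by (auto intro!: exI[of _ \<one>])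

lemma Ip_add: assumes "a \<in> Ip k" "b \<in> Ip k" shows "a \<oplus> b \<in> Ip k"
proof -
  obtain x y where xy: "x \<in> carrier R" "y \<in> carrier R" "a = z [^] k \<otimes> x" "b = z [^] k \<otimes> y"
    using assms unfolding Ip_def by auto
  have "a \<oplus> b = z [^] k \<otimes> (x \<oplus> y)" using xy zc by (simp add: r_distr)
  then show ?thesis unfolding Ip_def using xy by auto
qed

lemma Ip_mono: assumes "i \<le> j" shows "Ip j \<subseteq> Ip i"
proof
  fix a assume "a \<in> Ip j"
  then obtain x where x: "x \<in> carrier R" "a = z [^] j \<otimes> x" unfolding Ip_def by auto
  have j: "j = i + (j - i)" using assms by simp
  have "z [^] j = z [^] i \<otimes> z [^] (j - i)" using zc by (subst j) (simp add: nat_pow_mult)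
  then have "a = z [^] i \<otimes> (z [^] (j - i) \<otimes> x)" using x zc by (simp add: m_assoc)
  then show "a \<in> Ip i" unfolding Ip_def using x zc by auto
qed

lemma decomp: assumes "y \<in> carrier R"
  shows "y \<in> Ip k \<or> (\<exists>j<k. \<exists>u\<in>Units R. y = z [^] j \<otimes> u)"
proof (induction k)
  case 0
  then show ?case using assms Ip0 by simp
next
  case (Suc k)
  show ?case
  proof (cases "y \<in> Ip k")
    case True
    then obtain x where x: "x \<in> carrier R" "y = z [^] k \<otimes> x" unfolding Ip_def by auto
    show ?thesis
    proof (cases "x \<in> Units R")
      case True
      then show ?thesis using x by auto
    next
      case False
      then have "x \<in> M" using nonunit_in_M x by simp
      then obtain x' where x': "x' \<in> carrier R" "x = x' \<otimes> z" unfolding Mz cgenideal_def by auto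
      have "y = z [^] Suc k \<otimes> x'" using x x' zc by (simp add: m_assoc m_comm)
      then show ?thesis unfolding Ip_def using x' by auto
    qed
  next
    case False
    then show ?thesis using Suc.IH using less_Suc_eq by blast
  qed
qed

lemma Kz_sub: "Kz \<subseteq> Ip (rr - 1)"
proof
  fix y assume y: "y \<in> Kz"
  then have yc: "y \<in> carrier R" and zy: "z \<otimes> y = \<zero>" unfolding Kz_def by auto
  show "y \<in> Ip (rr - 1)"
  proof (rule ccontr)
    assume "y \<notin> Ip (rr - 1)"
    then obtain j u where ju: "j < rr - 1" "u \<in> Units R" "y = z [^] j \<otimes> u"
      using decomp[OF yc, of "rr - 1"] by auto
    have uc: "u \<in> carrier R" using ju by auto
    have "z \<otimes> y = z [^] Suc j \<otimes> u" using ju uc zc by (simp add: m_assoc m_comm m_lcomm)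
    then have "u \<otimes> z [^] Suc j = \<zero>" using zy uc zc m_comm by simp
    then have "z [^] Suc j = \<zero>" using unit_cancel_zero ju(2) zc by simp
    moreover have "Suc j < rr" using ju by simp
    ultimately show False using rr_min by blast
  qed
qed

end

context fvr begin

lemma Kz_zero: "\<zero> \<in> Kz" unfolding Kz_def using zc by simp

lemma card_step: assumes "i < rr" shows "card (Ip i) = card (Ip (Suc i)) * card Kz"
proof -
  have "i \<le> rr - 1" using assms by simp
  then have KI: "Kz \<subseteq> Ip i" using Kz_sub Ip_mono[of i "rr - 1"] by blast
  have finI: "finite (Ip k)" for k using finite_subset[OF Ip_sub fin] .
  have finK: "finite Kz" using finite_subset[OF _ fin] unfolding Kz_def by auto
  have one: "\<forall>y\<in>Ip i. card {t \<in> Ip (Suc i). z \<otimes> y = t} = 1"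
  proof
    fix y assume y: "y \<in> Ip i"
    then obtain x where x: "x \<in> carrier R" "y = z [^] i \<otimes> x" unfolding Ip_def by auto
    have "z \<otimes> y = z [^] Suc i \<otimes> x" using x zc by (simp add: m_assoc m_comm m_lcomm)
    then have "z \<otimes> y \<in> Ip (Suc i)" unfolding Ip_def using x by auto
    then have "{t \<in> Ip (Suc i). z \<otimes> y = t} = {z \<otimes> y}" by auto
    then show "card {t \<in> Ip (Suc i). z \<otimes> y = t} = 1" by simp
  qed
  have fib: "\<forall>t\<in>Ip (Suc i). card {y \<in> Ip i. z \<otimes> y = t} = card Kz"
  proof
    fix t assume t: "t \<in> Ip (Suc i)"
    then obtain x where x: "x \<in> carrier R" "t = z [^] Suc i \<otimes> x" unfolding Ip_def by auto
    define y0 where "y0 = z [^] i \<otimes> x"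
    have y0I: "y0 \<in> Ip i" unfolding Ip_def y0_def using x by auto
    have y0c: "y0 \<in> carrier R" using y0I Ip_sub by auto
    have zy0: "z \<otimes> y0 = t" unfolding y0_def using x zc by (simp add: m_assoc m_comm m_lcomm)
    have "{y \<in> Ip i. z \<otimes> y = t} = (\<lambda>k. y0 \<oplus> k) ` Kz"
    proof
      show "{y \<in> Ip i. z \<otimes> y = t} \<subseteq> (\<lambda>k. y0 \<oplus> k) ` Kz"
      proof
        fix y assume y: "y \<in> {y \<in> Ip i. z \<otimes> y = t}"
        then have yc: "y \<in> carrier R" using Ip_sub by auto
        have "z \<otimes> (y \<ominus> y0) = z \<otimes> y \<ominus> z \<otimes> y0" using yc y0c zc by algebra
        have tc: "t \<in> carrier R" using zy0 y0c zc by auto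
        have "z \<otimes> (y \<ominus> y0) = \<zero>" using `z \<otimes> (y \<ominus> y0) = z \<otimes> y \<ominus> z \<otimes> y0` y zy0 tc by (simp add: r_neg minus_eq)
        then have "y \<ominus> y0 \<in> Kz" unfolding Kz_def using yc y0c by simp
        moreover have "y = y0 \<oplus> (y \<ominus> y0)" using yc y0c by algebra
        ultimately show "y \<in> (\<lambda>k. y0 \<oplus> k) ` Kz" by blast
      qed
      show "(\<lambda>k. y0 \<oplus> k) ` Kz \<subseteq> {y \<in> Ip i. z \<otimes> y = t}"
      proof
        fix y assume "y \<in> (\<lambda>k. y0 \<oplus> k) ` Kz"
        then obtain k where k: "k \<in> Kz" "y = y0 \<oplus> k" by auto
        have kc: "k \<in> carrier R" and zk: "z \<otimes> k = \<zero>" using k unfolding Kz_def by auto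
        have "z \<otimes> y = z \<otimes> y0 \<oplus> z \<otimes> k" using k kc y0c zc by (simp add: r_distr)
        also have "\<dots> = z \<otimes> y0" using zk y0c zc by simp
        finally have zyt: "z \<otimes> y = t" using zy0 by simp
        have "y \<in> Ip i" using Ip_add[OF y0I] KI k by auto
        with zyt show "y \<in> {y \<in> Ip i. z \<otimes> y = t}" by simp
      qed
    qed
    moreover have "inj_on (\<lambda>k. y0 \<oplus> k) Kz"
    proof (rule inj_onI)
      fix k1 k2 assume k: "k1 \<in> Kz" "k2 \<in> Kz" "y0 \<oplus> k1 = y0 \<oplus> k2"
      have kc: "k1 \<in> carrier R" "k2 \<in> carrier R" using k unfolding Kz_def by auto
      have "k1 = (\<ominus> y0) \<oplus> (y0 \<oplus> k1)" using kc y0c by algebra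
      also have "\<dots> = (\<ominus> y0) \<oplus> (y0 \<oplus> k2)" using k by simp
      also have "\<dots> = k2" using kc y0c by algebra
      finally show "k1 = k2" .
    qed
    ultimately show "card {y \<in> Ip i. z \<otimes> y = t} = card Kz" by (simp add: card_image)
  qed
  have "sum (\<lambda>t. card {y \<in> Ip i. z \<otimes> y = t}) (Ip (Suc i)) = 1 * card (Ip i)"
    by (rule sum_multicount[OF finI finI one])
  moreover have "sum (\<lambda>t. card {y \<in> Ip i. z \<otimes> y = t}) (Ip (Suc i)) = card (Ip (Suc i)) * card Kz"
    using fib by simp
  ultimately show ?thesis by simp
qed

lemma card_Ip: "m \<le> rr \<Longrightarrow> card (Ip (rr - m)) = card Kz ^ m"
proof (induction m)
  case 0
  then show ?case using Ip_rr by simp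
next
  case (Suc m)
  have e: "Suc (rr - Suc m) = rr - m" using Suc.prems by simp
  have "card (Ip (rr - Suc m)) = card (Ip (Suc (rr - Suc m))) * card Kz"
    using card_step Suc.prems by simp
  then show ?case using Suc e by simp
qed

lemma card_R: "card (carrier R) = card Kz ^ rr"
  using card_Ip[of rr] Ip0 by simp

lemma card_M: "card M = card Kz ^ (rr - 1)"
proof -
  have "rr - (rr - 1) = 1" using rr_prop by simp
  then show ?thesis using card_Ip[of "rr - 1"] Ip1 by simp
qed

lemma card_Kz_pos: "card Kz > 0"
  using Kz_zero finite_subset[OF _ fin] unfolding Kz_def by (auto simp: card_gt_0_iff)

lemma card_quot: "card (carrier (R Quot M)) = card Kz"
proof -
  have "card (a_rcosets M) * card M = order R"
    using a_lagrange[OF fin ideal.axioms(1)[OF M_ideal]] .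
  then have "card (carrier (R Quot M)) * card Kz ^ (rr - 1) = card Kz ^ rr"
    using card_R card_M unfolding FactRing_def order_def by simp
  moreover have "card Kz ^ rr = card Kz * card Kz ^ (rr - 1)"
    using rr_prop by (metis Suc_diff_1 power_Suc)
  ultimately show ?thesis using card_Kz_pos by simp
qed

end

lemma even_card_invol:
  assumes "finite S" "\<forall>x\<in>S. f x \<in> S \<and> f (f x) = x \<and> f x \<noteq> x"
  shows "even (card S)"
  using assms
proof (induction "card S" arbitrary: S rule: less_induct)
  case less
  show ?case
  proof (cases "S = {}")
    case True then show ?thesis by simp
  next
    case False
    then obtain x where x: "x \<in> S" by auto
    define S' where "S' = S - {x, f x}"
    have fx: "f x \<in> S" "f x \<noteq> x" "f (f x) = x" using less.prems x by auto
    have cS: "card S = Suc (Suc (card S'))"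
    proof -
      have "card S' = card S - card {x, f x}" unfolding S'_def using less.prems x fx
        by (simp add: card_Diff_subset)
      moreover have "card {x, f x} = 2" using fx by simp
      moreover have "card S \<ge> 2" using card_mono[OF less.prems(1), of "{x, f x}"] x fx by simp
      ultimately show ?thesis by simp
    qed
    have "even (card S')"
    proof (rule less.hyps)
      show "card S' < card S" using cS by simp
      show "finite S'" unfolding S'_def using less.prems by simp
      show "\<forall>y\<in>S'. f y \<in> S' \<and> f (f y) = y \<and> f y \<noteq> y"
      proof
        fix y assume y: "y \<in> S'"
        then have yS: "y \<in> S" "y \<noteq> x" "y \<noteq> f x" unfolding S'_def by auto
        have "f y \<noteq> x" using yS less.prems fx by metis
        moreover have "f y \<noteq> f x" using yS less.prems x by metis
        ultimately show "f y \<in> S' \<and> f (f y) = y \<and> f y \<noteq> y" unfolding S'_def using yS less.prems by auto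
      qed
    qed
    then show ?thesis using cS by simp
  qed
qed

context fvr begin

lemma coset_eq: "x \<in> carrier R \<Longrightarrow> M +> x = {h \<oplus> x | h. h \<in> M}"
  unfolding a_r_coset_def' by auto

lemma two_unit:
  assumes odd: "odd (card (carrier (R Quot M)))"
  shows "\<one> \<oplus> \<one> \<in> Units R"
proof (rule ccontr)
  assume nu: "\<one> \<oplus> \<one> \<notin> Units R"
  have tM: "\<one> \<oplus> \<one> \<in> M" using nonunit_in_M nu by simp
  have Msub: "additive_subgroup M R" using ideal.axioms(1)[OF M_ideal] .
  have Mc: "\<And>h. h \<in> M \<Longrightarrow> h \<in> carrier R" using M_sub by auto
  have Madd: "\<And>a b. a \<in> M \<Longrightarrow> b \<in> M \<Longrightarrow> a \<oplus> b \<in> M"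
    using additive_subgroup.a_closed[OF Msub] by blast
  have Mneg: "\<And>a. a \<in> M \<Longrightarrow> \<ominus> a \<in> M"
    using additive_subgroup.a_inv_closed[OF Msub] by blast
  define f where "f C = (\<lambda>c. c \<oplus> \<one>) ` C" for C
  have fco: "f (M +> x) = M +> (x \<oplus> \<one>)" if x: "x \<in> carrier R" for x
  proof -
    have "f (M +> x) = (\<lambda>c. c \<oplus> \<one>) ` {h \<oplus> x | h. h \<in> M}" unfolding f_def coset_eq[OF x] ..
    also have "\<dots> = {h \<oplus> (x \<oplus> \<one>) | h. h \<in> M}"
    proof (intro equalityI subsetI)
      fix c assume "c \<in> (\<lambda>c. c \<oplus> \<one>) ` {h \<oplus> x | h. h \<in> M}"
      then obtain h where h: "h \<in> M" "c = (h \<oplus> x) \<oplus> \<one>" by auto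
      then have "c = h \<oplus> (x \<oplus> \<one>)" using Mc x by (simp add: a_assoc)
      then show "c \<in> {h \<oplus> (x \<oplus> \<one>) | h. h \<in> M}" using h by auto
    next
      fix c assume "c \<in> {h \<oplus> (x \<oplus> \<one>) | h. h \<in> M}"
      then obtain h where h: "h \<in> M" "c = h \<oplus> (x \<oplus> \<one>)" by auto
      then have "c = (h \<oplus> x) \<oplus> \<one>" using Mc x by (simp add: a_assoc)
      then show "c \<in> (\<lambda>c. c \<oplus> \<one>) ` {h \<oplus> x | h. h \<in> M}" using h by auto
    qed
    also have "\<dots> = M +> (x \<oplus> \<one>)" using coset_eq x by simp
    finally show ?thesis .
  qed
  have twice: "M +> (x \<oplus> \<one> \<oplus> \<one>) = M +> x" if x: "x \<in> carrier R" for x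
  proof -
    have "{h \<oplus> (x \<oplus> \<one> \<oplus> \<one>) | h. h \<in> M} = {h \<oplus> x | h. h \<in> M}"
    proof (intro equalityI subsetI)
      fix c assume "c \<in> {h \<oplus> (x \<oplus> \<one> \<oplus> \<one>) | h. h \<in> M}"
      then obtain h where h: "h \<in> M" "c = h \<oplus> (x \<oplus> \<one> \<oplus> \<one>)" by auto
      have "c = (h \<oplus> (\<one> \<oplus> \<one>)) \<oplus> x" using h Mc x by algebra
      then show "c \<in> {h \<oplus> x | h. h \<in> M}" using Madd[OF h(1) tM] by auto
    next
      fix c assume "c \<in> {h \<oplus> x | h. h \<in> M}"
      then obtain h where h: "h \<in> M" "c = h \<oplus> x" by auto
      have "c = (h \<oplus> \<ominus> (\<one> \<oplus> \<one>)) \<oplus> (x \<oplus> \<one> \<oplus> \<one>)" using h Mc x by algebra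
      then show "c \<in> {h \<oplus> (x \<oplus> \<one> \<oplus> \<one>) | h. h \<in> M}" using Madd[OF h(1) Mneg[OF tM]] by auto
    qed
    then show ?thesis using coset_eq x by simp
  qed
  have neq: "M +> (x \<oplus> \<one>) \<noteq> M +> x" if x: "x \<in> carrier R" for x
  proof
    assume e: "M +> (x \<oplus> \<one>) = M +> x"
    have z0: "\<zero> \<in> M" using additive_subgroup.zero_closed[OF Msub] .
    have "\<zero> \<oplus> (x \<oplus> \<one>) \<in> {h \<oplus> (x \<oplus> \<one>) | h. h \<in> M}" using z0 by blast
    then have "x \<oplus> \<one> \<in> M +> (x \<oplus> \<one>)" using coset_eq x by simp
    then have "x \<oplus> \<one> \<in> {h \<oplus> x | h. h \<in> M}" using e coset_eq x by simp
    then obtain h where h: "h \<in> M" "x \<oplus> \<one> = h \<oplus> x" by auto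
    have "\<one> = (x \<oplus> \<one>) \<oplus> \<ominus> x" using x by algebra
    also have "\<dots> = (h \<oplus> x) \<oplus> \<ominus> x" using h by simp
    also have "\<dots> = h" using h Mc x by algebra
    finally show False using h one_notin_M by simp
  qed
  have car: "carrier (R Quot M) = {M +> x | x. x \<in> carrier R}"
    unfolding FactRing_def A_RCOSETS_def' by auto
  have finQ: "finite (carrier (R Quot M))"
  proof -
    have "carrier (R Quot M) = (\<lambda>x. M +> x) ` carrier R" using car by auto
    then show ?thesis using fin by simp
  qed
  have "even (card (carrier (R Quot M)))"
  proof (rule even_card_invol[OF finQ, of f])
    show "\<forall>C\<in>carrier (R Quot M). f C \<in> carrier (R Quot M) \<and> f (f C) = C \<and> f C \<noteq> C"
    proof
      fix C assume "C \<in> carrier (R Quot M)"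
      then obtain x where x: "x \<in> carrier R" "C = M +> x" using car by auto
      have x1: "x \<oplus> \<one> \<in> carrier R" using x by simp
      show "f C \<in> carrier (R Quot M) \<and> f (f C) = C \<and> f C \<noteq> C"
        using fco[OF x(1)] fco[OF x1] twice[OF x(1)] neq[OF x(1)] car x x1 by auto
    qed
  qed
  then show False using odd by simp
qed

end

lemma cs_sum: fixes g :: "'b \<Rightarrow> real" assumes "finite S"
  shows "(sum g S)^2 \<le> card S * (\<Sum>x\<in>S. (g x)^2)"
proof (cases "S = {}")
  case True then show ?thesis by simp
next
  case False
  define k where "k = real (card S)"
  have k: "k > 0" using False assms k_def by (simp add: card_gt_0_iff)
  define m where "m = sum g S / k"
  have "0 \<le> (\<Sum>x\<in>S. (g x - m)^2)" by (simp add: sum_nonneg)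
  also have "\<dots> = (\<Sum>x\<in>S. (g x)^2 - 2 * m * g x + m^2)" by (rule sum.cong) (auto simp: power2_diff)
  also have "\<dots> = (\<Sum>x\<in>S. (g x)^2) - (\<Sum>x\<in>S. 2 * m * g x) + k * m^2"
    by (simp add: sum.distrib sum_subtractf k_def)
  also have "\<dots> = (\<Sum>x\<in>S. (g x)^2) - 2 * m * sum g S + k * m^2"
    by (simp add: sum_distrib_left)
  also have "\<dots> = (\<Sum>x\<in>S. (g x)^2) - (sum g S)^2 / k"
    using k by (simp add: m_def power2_eq_square field_simps)
  finally have "(sum g S)^2 / k \<le> (\<Sum>x\<in>S. (g x)^2)" by simp
  then show ?thesis using k by (simp add: k_def field_simps)
qed

lemma cs_main:
  fixes f :: "'b \<Rightarrow> real"
  assumes D: "finite D" "S \<subseteq> D" "D \<noteq> {}"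
  shows "sum f S \<le> card S * (sum f D / card D)
           + sqrt (card S * ((\<Sum>x\<in>D. (f x)^2) - (sum f D)^2 / card D))"
proof -
  define k where "k = real (card D)"
  have k: "k > 0" using D k_def by (simp add: card_gt_0_iff)
  define m where "m = sum f D / k"
  have finS: "finite S" using D finite_subset by blast
  define g where "g x = f x - m" for x
  have sS: "sum f S = card S * m + sum g S" unfolding g_def by (simp add: sum_subtractf)
  have "(sum g S)^2 \<le> card S * (\<Sum>x\<in>S. (g x)^2)" by (rule cs_sum[OF finS])
  also have "(\<Sum>x\<in>S. (g x)^2) \<le> (\<Sum>x\<in>D. (g x)^2)"
    by (rule sum_mono2[OF D(1) D(2)]) simp
  also have "(\<Sum>x\<in>D. (g x)^2) = (\<Sum>x\<in>D. (f x)^2 - 2 * m * f x + m^2)" by (rule sum.cong) (auto simp: g_def power2_diff)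
  also have "\<dots> = (\<Sum>x\<in>D. (f x)^2) - (\<Sum>x\<in>D. 2 * m * f x) + k * m^2"
    by (simp add: sum.distrib sum_subtractf k_def)
  also have "\<dots> = (\<Sum>x\<in>D. (f x)^2) - 2 * m * sum f D + k * m^2"
    by (simp add: sum_distrib_left)
  also have "\<dots> = (\<Sum>x\<in>D. (f x)^2) - (sum f D)^2 / k"
    using k by (simp add: m_def power2_eq_square field_simps)
  finally have sq: "(sum g S)^2 \<le> card S * ((\<Sum>x\<in>D. (f x)^2) - (sum f D)^2 / k)"
    by (simp add: mult_left_mono)
  have "sum g S \<le> sqrt (card S * ((\<Sum>x\<in>D. (f x)^2) - (sum f D)^2 / k))"
    using sq real_le_rsqrt by blast
  then show ?thesis using sS unfolding m_def k_def by simp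
qed

lemma phi_sums:
  fixes e :: "'v \<Rightarrow> 'p \<Rightarrow> 'a"
  assumes fin: "finite V" "finite U" "finite P" and eU: "\<And>x p. x \<in> V \<Longrightarrow> p \<in> P \<Longrightarrow> e x p \<in> U"
  defines "phi \<equiv> \<lambda>x t. (\<Sum>p\<in>P. if e x p = t then 1 else 0 :: real)"
  shows "(\<Sum>x\<in>V. \<Sum>t\<in>U. phi x t) = card V * card P"
    and "(\<Sum>x\<in>V. \<Sum>t\<in>U. (phi x t)^2) = (\<Sum>p1\<in>P. \<Sum>p2\<in>P. real (card {x\<in>V. e x p1 = e x p2}))"
proof -
  have d1: "(\<Sum>t\<in>U. if e x p = t then 1 else 0 :: real) = 1" if "x \<in> V" "p \<in> P" for x p
    using eU[OF that] fin(2) by (simp add: sum.delta)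
  have "(\<Sum>x\<in>V. \<Sum>t\<in>U. phi x t) = (\<Sum>x\<in>V. \<Sum>p\<in>P. \<Sum>t\<in>U. if e x p = t then 1 else 0 :: real)"
    unfolding phi_def by (simp add: sum.swap[of _ U P])
  also have "\<dots> = (\<Sum>x\<in>V. \<Sum>p\<in>P. 1)" using d1 by simp
  finally show "(\<Sum>x\<in>V. \<Sum>t\<in>U. phi x t) = card V * card P" by simp
  have d2: "(\<Sum>t\<in>U. (if e x p1 = t then 1 else 0) * (if e x p2 = t then 1 else 0) :: real)
        = (if e x p1 = e x p2 then 1 else 0)" if "x \<in> V" "p1 \<in> P" for x p1 p2
  proof -
    have "(\<Sum>t\<in>U. (if e x p1 = t then 1 else 0) * (if e x p2 = t then 1 else 0) :: real)
        = (\<Sum>t\<in>U. if e x p1 = t then (if e x p2 = e x p1 then 1 else 0) else 0)"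
      by (rule sum.cong) auto
    also have "\<dots> = (if e x p1 = e x p2 then 1 else 0)"
      using eU[OF that] fin(2) by (simp add: sum.delta eq_commute)
    finally show ?thesis .
  qed
  have "(\<Sum>x\<in>V. \<Sum>t\<in>U. (phi x t)^2)
      = (\<Sum>x\<in>V. \<Sum>t\<in>U. \<Sum>p1\<in>P. \<Sum>p2\<in>P. (if e x p1 = t then 1 else 0) * (if e x p2 = t then 1 else 0) :: real)"
    unfolding phi_def power2_eq_square by (simp add: sum_product)
  also have "\<dots> = (\<Sum>x\<in>V. \<Sum>p1\<in>P. \<Sum>p2\<in>P. \<Sum>t\<in>U. (if e x p1 = t then 1 else 0) * (if e x p2 = t then 1 else 0) :: real)"
    by (simp add: sum.swap[of _ U P] sum.swap[of _ U P])
  also have "\<dots> = (\<Sum>x\<in>V. \<Sum>p1\<in>P. \<Sum>p2\<in>P. if e x p1 = e x p2 then 1 else 0 :: real)"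
    by (rule sum.cong[OF refl], rule sum.cong[OF refl], rule sum.cong[OF refl]) (simp add: d2)
  also have "\<dots> = (\<Sum>p1\<in>P. \<Sum>p2\<in>P. \<Sum>x\<in>V. if e x p1 = e x p2 then 1 else 0 :: real)"
    by (simp add: sum.swap[of _ V P] sum.swap[of _ V P])
  also have "\<dots> = (\<Sum>p1\<in>P. \<Sum>p2\<in>P. real (card {x\<in>V. e x p1 = e x p2}))"
    using fin(1) by (simp add: sum.inter_filter[symmetric])
  finally show "(\<Sum>x\<in>V. \<Sum>t\<in>U. (phi x t)^2) = (\<Sum>p1\<in>P. \<Sum>p2\<in>P. real (card {x\<in>V. e x p1 = e x p2}))" .
qed


locale fvr2 = fvr +
  assumes tu: "\<one> \<oplus> \<one> \<in> Units R"
begin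

definition Vd :: "nat \<Rightarrow> 'a set \<Rightarrow> (nat \<Rightarrow> 'a) set" where
  "Vd d S = PiE {..<d} (\<lambda>_. S)"

definition Qf :: "nat \<Rightarrow> (nat \<Rightarrow> 'a) \<Rightarrow> 'a" where
  "Qf d v = finsum R (\<lambda>i. v i \<otimes> v i) {..<d}"

definition ee :: "nat \<Rightarrow> (nat \<Rightarrow> 'a) \<Rightarrow> (nat \<Rightarrow> 'a) \<Rightarrow> 'a \<Rightarrow> 'a" where
  "ee d x y w = Qf d (\<lambda>i. x i \<ominus> y i) \<oplus> w"

lemma Qf_closed: "(\<And>i. i < d \<Longrightarrow> v i \<in> carrier R) \<Longrightarrow> Qf d v \<in> carrier R"
  unfolding Qf_def by (intro finsum_closed) (auto simp: Pi_def)

lemma Qf_split: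
  assumes "i0 < d" "\<And>i. i < d \<Longrightarrow> v i \<in> carrier R"
  shows "Qf d v = v i0 \<otimes> v i0 \<oplus> finsum R (\<lambda>i. v i \<otimes> v i) ({..<d} - {i0})"
proof -
  have e: "{..<d} = insert i0 ({..<d} - {i0})" using assms by auto
  show ?thesis unfolding Qf_def
    by (subst e, rule finsum_insert) (use assms in \<open>auto simp: Pi_def\<close>)
qed

lemma ee_closed: "x \<in> Vd d (carrier R) \<Longrightarrow> y \<in> Vd d (carrier R) \<Longrightarrow> w \<in> carrier R \<Longrightarrow> ee d x y w \<in> carrier R"
  unfolding ee_def Vd_def by (intro add.m_closed Qf_closed) auto

lemma diff_of_eq:
  assumes c: "Xa \<in> carrier R" "Ya \<in> carrier R" "S \<in> carrier R" "S' \<in> carrier R" "w \<in> carrier R" "w' \<in> carrier R"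
  and e: "Xa \<oplus> S \<oplus> w = Ya \<oplus> S' \<oplus> w'"
  shows "Xa \<ominus> Ya = (S' \<oplus> w') \<ominus> (S \<oplus> w)"
proof -
  have "Xa \<ominus> Ya = (Xa \<oplus> S \<oplus> w) \<ominus> Ya \<ominus> (S \<oplus> w)" using c by algebra
  also have "\<dots> = (Ya \<oplus> S' \<oplus> w') \<ominus> Ya \<ominus> (S \<oplus> w)" using e by simp
  also have "\<dots> = (S' \<oplus> w') \<ominus> (S \<oplus> w)" using c by algebra
  finally show ?thesis .
qed

lemma sq_diff:
  assumes c: "u \<in> carrier R" "a \<in> carrier R" "b \<in> carrier R"
  shows "(u \<ominus> a) \<otimes> (u \<ominus> a) \<ominus> (u \<ominus> b) \<otimes> (u \<ominus> b) = ((\<one> \<oplus> \<one>) \<otimes> (b \<ominus> a)) \<otimes> u \<oplus> (a \<otimes> a \<ominus> b \<otimes> b)"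
  using c by algebra

lemma add_rcancel': assumes "Xa \<in> carrier R" "Ya \<in> carrier R" "c \<in> carrier R" "Xa \<oplus> c = Ya \<oplus> c"
  shows "Xa = Ya"
proof -
  have "Xa = (Xa \<oplus> c) \<ominus> c" using assms(1-3) by algebra
  also have "\<dots> = (Ya \<oplus> c) \<ominus> c" using assms by simp
  also have "\<dots> = Ya" using assms(1-3) by algebra
  finally show ?thesis .
qed

lemma key_alg:
  assumes c: "u \<in> carrier R" "u' \<in> carrier R" "a \<in> carrier R" "b \<in> carrier R"
     "S1 \<in> carrier R" "S2 \<in> carrier R" "w1 \<in> carrier R" "w2 \<in> carrier R"
  and e1: "(u \<ominus> a) \<otimes> (u \<ominus> a) \<oplus> S1 \<oplus> w1 = (u \<ominus> b) \<otimes> (u \<ominus> b) \<oplus> S2 \<oplus> w2"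
  and e2: "(u' \<ominus> a) \<otimes> (u' \<ominus> a) \<oplus> S1 \<oplus> w1 = (u' \<ominus> b) \<otimes> (u' \<ominus> b) \<oplus> S2 \<oplus> w2"
  and ab: "a \<ominus> b \<notin> M"
  shows "u = u'"
proof -
  define k where "k = (\<one> \<oplus> \<one>) \<otimes> (b \<ominus> a)"
  define cc where "cc = a \<otimes> a \<ominus> b \<otimes> b"
  have kc: "k \<in> carrier R" and ccc: "cc \<in> carrier R" unfolding k_def cc_def using c by auto
  have d1: "(u \<ominus> a) \<otimes> (u \<ominus> a) \<ominus> (u \<ominus> b) \<otimes> (u \<ominus> b) = (S2 \<oplus> w2) \<ominus> (S1 \<oplus> w1)"
    by (rule diff_of_eq[OF _ _ c(5-8) e1]) (use c in auto)
  have d2: "(u' \<ominus> a) \<otimes> (u' \<ominus> a) \<ominus> (u' \<ominus> b) \<otimes> (u' \<ominus> b) = (S2 \<oplus> w2) \<ominus> (S1 \<oplus> w1)"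
    by (rule diff_of_eq[OF _ _ c(5-8) e2]) (use c in auto)
  have s1: "k \<otimes> u \<oplus> cc = (u \<ominus> a) \<otimes> (u \<ominus> a) \<ominus> (u \<ominus> b) \<otimes> (u \<ominus> b)"
    unfolding k_def cc_def using sq_diff[OF c(1,3,4)] by (rule sym)
  have s2: "k \<otimes> u' \<oplus> cc = (u' \<ominus> a) \<otimes> (u' \<ominus> a) \<ominus> (u' \<ominus> b) \<otimes> (u' \<ominus> b)"
    unfolding k_def cc_def using sq_diff[OF c(2,3,4)] by (rule sym)
  have "k \<otimes> u \<oplus> cc = k \<otimes> u' \<oplus> cc" unfolding s1 s2 d1 d2 ..
  then have ku: "k \<otimes> u = k \<otimes> u'" using add_rcancel'[of "k \<otimes> u" "k \<otimes> u'" cc] kc ccc c by simp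
  have "b \<ominus> a \<notin> M"
  proof
    assume "b \<ominus> a \<in> M"
    then have "\<ominus> (b \<ominus> a) \<in> M" using additive_subgroup.a_inv_closed[OF ideal.axioms(1)[OF M_ideal]] by blast
    moreover have "\<ominus> (b \<ominus> a) = a \<ominus> b" using c by algebra
    ultimately show False using ab by simp
  qed
  then have bu: "b \<ominus> a \<in> Units R" using notM_unit c by simp
  have "k \<in> Units R" unfolding k_def using tu bu by simp
  then show ?thesis using ku Units_l_cancel c by blast
qed

end

context fvr2 begin

lemma add_lcancel': assumes "q \<in> carrier R" "a \<in> carrier R" "b \<in> carrier R" "q \<oplus> a = q \<oplus> b"
  shows "a = b"
proof -
  have "a = \<ominus> q \<oplus> (q \<oplus> a)" using assms(1-3) by algebra
  also have "\<dots> = \<ominus> q \<oplus> (q \<oplus> b)" using assms(4) by simp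
  also have "\<dots> = b" using assms(1-3) by algebra
  finally show ?thesis .
qed

lemma sub_lcancel': assumes "q \<in> carrier R" "a \<in> carrier R" "b \<in> carrier R" "q \<ominus> a = q \<ominus> b"
  shows "a = b"
proof -
  have "a = q \<ominus> (q \<ominus> a)" using assms(1-3) by algebra
  also have "\<dots> = q \<ominus> (q \<ominus> b)" using assms(4) by simp
  also have "\<dots> = b" using assms(1-3) by algebra
  finally show ?thesis .
qed

lemma Vd_fin: "finite S \<Longrightarrow> finite (Vd d S)" unfolding Vd_def by (intro finite_PiE) auto

lemma Vd_card: "finite S \<Longrightarrow> card (Vd d S) = card S ^ d" unfolding Vd_def by (simp add: card_PiE)

lemma good_bound:
  assumes y1: "y1 \<in> Vd d (carrier R)" and y2: "y2 \<in> Vd d (carrier R)"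
    and w: "w1 \<in> carrier R" "w2 \<in> carrier R" and i0: "i0 < d" and nm: "y1 i0 \<ominus> y2 i0 \<notin> M"
  shows "card {x \<in> Vd d (carrier R). ee d x y1 w1 = ee d x y2 w2} \<le> card (carrier R) ^ (d - 1)"
proof -
  define Sx where "Sx = {x \<in> Vd d (carrier R). ee d x y1 w1 = ee d x y2 w2}"
  define F where "F = {..<d} - {i0}"
  have y1c: "\<And>i. i < d \<Longrightarrow> y1 i \<in> carrier R" and y2c: "\<And>i. i < d \<Longrightarrow> y2 i \<in> carrier R"
    using y1 y2 unfolding Vd_def by auto
  have inj: "inj_on (\<lambda>x. restrict x F) Sx"
  proof (rule inj_onI)
    fix x x' assume x: "x \<in> Sx" and x': "x' \<in> Sx" and r: "restrict x F = restrict x' F"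
    have xV: "x \<in> Vd d (carrier R)" and x'V: "x' \<in> Vd d (carrier R)" using x x' unfolding Sx_def by auto
    have xc: "\<And>i. i < d \<Longrightarrow> x i \<in> carrier R" and x'c: "\<And>i. i < d \<Longrightarrow> x' i \<in> carrier R"
      using xV x'V unfolding Vd_def by auto
    have agree: "x i = x' i" if i: "i \<in> F" for i
    proof -
      have "restrict x F i = restrict x' F i" using r by simp
      then show ?thesis using i by simp
    qed
    define S1 where "S1 = finsum R (\<lambda>i. (x i \<ominus> y1 i) \<otimes> (x i \<ominus> y1 i)) F"
    define S2 where "S2 = finsum R (\<lambda>i. (x i \<ominus> y2 i) \<otimes> (x i \<ominus> y2 i)) F"
    have S1': "finsum R (\<lambda>i. (x' i \<ominus> y1 i) \<otimes> (x' i \<ominus> y1 i)) F = S1"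
      unfolding S1_def by (rule finsum_cong') (auto simp: agree F_def xc y1c)
    have S2': "finsum R (\<lambda>i. (x' i \<ominus> y2 i) \<otimes> (x' i \<ominus> y2 i)) F = S2"
      unfolding S2_def by (rule finsum_cong') (auto simp: agree F_def xc y2c)
    have S1c: "S1 \<in> carrier R" unfolding S1_def by (intro finsum_closed) (auto simp: F_def xc y1c)
    have S2c: "S2 \<in> carrier R" unfolding S2_def by (intro finsum_closed) (auto simp: F_def xc y2c)
    have ex: "ee d z y w = (z i0 \<ominus> y i0) \<otimes> (z i0 \<ominus> y i0) \<oplus> finsum R (\<lambda>i. (z i \<ominus> y i) \<otimes> (z i \<ominus> y i)) F \<oplus> w"
      if "\<And>i. i < d \<Longrightarrow> z i \<in> carrier R" "\<And>i. i < d \<Longrightarrow> y i \<in> carrier R" for z y w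
      unfolding ee_def F_def using Qf_split[OF i0, of "\<lambda>i. z i \<ominus> y i"] that by simp
    have e1: "(x i0 \<ominus> y1 i0) \<otimes> (x i0 \<ominus> y1 i0) \<oplus> S1 \<oplus> w1 = (x i0 \<ominus> y2 i0) \<otimes> (x i0 \<ominus> y2 i0) \<oplus> S2 \<oplus> w2"
      using x unfolding Sx_def S1_def S2_def using ex[OF xc y1c] ex[OF xc y2c] by simp
    have e2: "(x' i0 \<ominus> y1 i0) \<otimes> (x' i0 \<ominus> y1 i0) \<oplus> S1 \<oplus> w1 = (x' i0 \<ominus> y2 i0) \<otimes> (x' i0 \<ominus> y2 i0) \<oplus> S2 \<oplus> w2"
      using x' unfolding Sx_def using ex[OF x'c y1c] ex[OF x'c y2c] S1' S2' by simp
    have "x i0 = x' i0"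
      by (rule key_alg[OF xc[OF i0] x'c[OF i0] y1c[OF i0] y2c[OF i0] S1c S2c w e1 e2 nm])
    then have "\<And>i. i \<in> {..<d} \<Longrightarrow> x i = x' i" using agree unfolding F_def by auto
    then show "x = x'" by (intro PiE_ext[OF xV[unfolded Vd_def] x'V[unfolded Vd_def]]) auto
  qed
  have img: "(\<lambda>x. restrict x F) ` Sx \<subseteq> PiE F (\<lambda>_. carrier R)"
  proof (rule image_subsetI)
    fix x assume "x \<in> Sx"
    then have "\<And>i. i < d \<Longrightarrow> x i \<in> carrier R" unfolding Sx_def Vd_def by auto
    then show "restrict x F \<in> PiE F (\<lambda>_. carrier R)" unfolding restrict_PiE_iff F_def by auto
  qed
  have finP: "finite (PiE F (\<lambda>_. carrier R))" unfolding F_def using fin by (intro finite_PiE) auto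
  have "card Sx = card ((\<lambda>x. restrict x F) ` Sx)" using card_image[OF inj] by simp
  also have "\<dots> \<le> card (PiE F (\<lambda>_. carrier R))" by (rule card_mono[OF finP img])
  also have "\<dots> = card (carrier R) ^ card F" by (simp add: card_PiE F_def)
  also have "card F = d - 1" unfolding F_def using i0 by simp
  finally show ?thesis unfolding Sx_def .
qed

lemma bad_bound:
  assumes y1: "y1 \<in> Vd d (carrier R)" and y2: "y2 \<in> Vd d (carrier R)"
    and W: "W \<subseteq> carrier R" "finite W"
  shows "(\<Sum>w1\<in>W. \<Sum>w2\<in>W. real (card {x \<in> Vd d (carrier R). ee d x y1 w1 = ee d x y2 w2}))
          \<le> real (card (Vd d (carrier R))) * card W"
proof -
  let ?V = "Vd d (carrier R)"
  have finV: "finite ?V" using Vd_fin fin by simp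
  have c1: "card {w2 \<in> W. ee d x y1 w1 = ee d x y2 w2} \<le> 1" if x: "x \<in> ?V" for x w1
  proof -
    have "\<forall>a\<in>{w2 \<in> W. ee d x y1 w1 = ee d x y2 w2}. \<forall>b\<in>{w2 \<in> W. ee d x y1 w1 = ee d x y2 w2}. a = b"
    proof (intro ballI)
      fix a b assume a: "a \<in> {w2 \<in> W. ee d x y1 w1 = ee d x y2 w2}" and b: "b \<in> {w2 \<in> W. ee d x y1 w1 = ee d x y2 w2}"
      have ac: "a \<in> carrier R" and bc: "b \<in> carrier R" using a b W by auto
      have qc: "Qf d (\<lambda>i. x i \<ominus> y2 i) \<in> carrier R" using x y2 unfolding Vd_def by (intro Qf_closed) auto
      have "Qf d (\<lambda>i. x i \<ominus> y2 i) \<oplus> a = Qf d (\<lambda>i. x i \<ominus> y2 i) \<oplus> b" using a b unfolding ee_def by simp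
      then show "a = b" using add_lcancel'[OF qc ac bc] by simp
    qed
    then show ?thesis using card_le_Suc0_iff_eq[of "{w2 \<in> W. ee d x y1 w1 = ee d x y2 w2}"] W by simp
  qed
  have "(\<Sum>w1\<in>W. \<Sum>w2\<in>W. real (card {x \<in> ?V. ee d x y1 w1 = ee d x y2 w2}))
      = (\<Sum>w1\<in>W. \<Sum>w2\<in>W. \<Sum>x\<in>?V. if ee d x y1 w1 = ee d x y2 w2 then 1 else 0 :: real)"
    using finV by (simp add: sum.inter_filter[symmetric])
  also have "\<dots> = (\<Sum>x\<in>?V. \<Sum>w1\<in>W. \<Sum>w2\<in>W. if ee d x y1 w1 = ee d x y2 w2 then 1 else 0 :: real)"
    by (simp add: sum.swap[of _ W ?V] sum.swap[of _ W ?V])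
  also have "\<dots> = (\<Sum>x\<in>?V. \<Sum>w1\<in>W. real (card {w2 \<in> W. ee d x y1 w1 = ee d x y2 w2}))"
    using W by (simp add: sum.inter_filter[symmetric])
  also have "\<dots> \<le> (\<Sum>x\<in>?V. \<Sum>w1\<in>W. 1)"
    by (intro sum_mono) (use c1 in auto)
  also have "\<dots> = real (card ?V) * card W" by simp
  finally show ?thesis .
qed

lemma badcount:
  assumes y1: "y1 \<in> Vd d (carrier R)" and Y: "Y \<subseteq> Vd d (carrier R)"
  shows "card {y2 \<in> Y. \<forall>i<d. y1 i \<ominus> y2 i \<in> M} \<le> card M ^ d"
proof -
  let ?B = "{y2 \<in> Y. \<forall>i<d. y1 i \<ominus> y2 i \<in> M}"
  let ?g = "\<lambda>y2. restrict (\<lambda>i. y1 i \<ominus> y2 i) {..<d}"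
  have inj: "inj_on ?g ?B"
  proof (rule inj_onI)
    fix a b assume a: "a \<in> ?B" and b: "b \<in> ?B" and e: "?g a = ?g b"
    have aV: "a \<in> Vd d (carrier R)" and bV: "b \<in> Vd d (carrier R)" using a b Y by auto
    have "a i = b i" if i: "i \<in> {..<d}" for i
    proof -
      have "restrict (\<lambda>i. y1 i \<ominus> a i) {..<d} i = restrict (\<lambda>i. y1 i \<ominus> b i) {..<d} i" using e by simp
      then have "y1 i \<ominus> a i = y1 i \<ominus> b i" using i by simp
      moreover have c: "y1 i \<in> carrier R" "a i \<in> carrier R" "b i \<in> carrier R"
        using y1 aV bV i unfolding Vd_def by auto
      ultimately show ?thesis using sub_lcancel' by blast
    qed
    then show "a = b" by (intro PiE_ext[OF aV[unfolded Vd_def] bV[unfolded Vd_def]]) auto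
  qed
  have img: "?g ` ?B \<subseteq> PiE {..<d} (\<lambda>_. M)"
  proof (rule image_subsetI)
    fix y2 assume "y2 \<in> ?B"
    then show "?g y2 \<in> PiE {..<d} (\<lambda>_. M)" unfolding restrict_PiE_iff by auto
  qed
  have finM: "finite M" using finite_subset[OF M_sub fin] .
  have finP: "finite (PiE {..<d} (\<lambda>_. M))" using finM by (intro finite_PiE) auto
  have "card ?B = card (?g ` ?B)" using card_image[OF inj] by simp
  also have "\<dots> \<le> card (PiE {..<d} (\<lambda>_. M))" by (rule card_mono[OF finP img])
  also have "\<dots> = card M ^ d" by (simp add: card_PiE)
  finally show ?thesis .
qed

end

context fvr2 begin

lemma sum_pairs: "(\<Sum>p\<in>Y \<times> W. h p) = (\<Sum>y\<in>Y. \<Sum>w\<in>W. h (y, w))"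
  by (simp add: sum.cartesian_product)

lemma sumP2:
  assumes Y: "Y \<subseteq> Vd d (carrier R)" and W: "W \<subseteq> carrier R" and d: "d \<ge> 1"
  shows "(\<Sum>p1\<in>Y \<times> W. \<Sum>p2\<in>Y \<times> W. real (card {x \<in> Vd d (carrier R). ee d x (fst p1) (snd p1) = ee d x (fst p2) (snd p2)}))
    \<le> real (card Y) ^ 2 * real (card W) ^ 2 * real (card (carrier R)) ^ (d - 1)
      + real (card Y) * real (card M) ^ d * real (card (Vd d (carrier R))) * real (card W)"
proof -
  let ?V = "Vd d (carrier R)"
  let ?c = "\<lambda>y1 w1 y2 w2. real (card {x \<in> ?V. ee d x y1 w1 = ee d x y2 w2})"
  let ?bad = "\<lambda>y1 y2. \<forall>i<d. y1 i \<ominus> y2 i \<in> M"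
  have finV: "finite ?V" using Vd_fin fin by simp
  have finY: "finite Y" using finite_subset[OF Y finV] .
  have finW: "finite W" using finite_subset[OF W fin] .
  have "(\<Sum>p1\<in>Y \<times> W. \<Sum>p2\<in>Y \<times> W. real (card {x \<in> ?V. ee d x (fst p1) (snd p1) = ee d x (fst p2) (snd p2)}))
      = (\<Sum>y1\<in>Y. \<Sum>w1\<in>W. \<Sum>y2\<in>Y. \<Sum>w2\<in>W. ?c y1 w1 y2 w2)"
    by (simp add: sum_pairs)
  also have "\<dots> = (\<Sum>y1\<in>Y. \<Sum>y2\<in>Y. \<Sum>w1\<in>W. \<Sum>w2\<in>W. ?c y1 w1 y2 w2)"
    by (rule sum.cong[OF refl]) (rule sum.swap)
  also have "\<dots> \<le> (\<Sum>y1\<in>Y. \<Sum>y2\<in>Y. real (card W) ^ 2 * real (card (carrier R)) ^ (d - 1)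
                    + (if ?bad y1 y2 then real (card ?V) * real (card W) else 0))"
  proof (intro sum_mono)
    fix y1 y2 assume y1: "y1 \<in> Y" and y2: "y2 \<in> Y"
    have y1V: "y1 \<in> ?V" and y2V: "y2 \<in> ?V" using y1 y2 Y by auto
    show "(\<Sum>w1\<in>W. \<Sum>w2\<in>W. ?c y1 w1 y2 w2) \<le> real (card W) ^ 2 * real (card (carrier R)) ^ (d - 1)
                    + (if ?bad y1 y2 then real (card ?V) * real (card W) else 0)"
    proof (cases "?bad y1 y2")
      case True
      have "(\<Sum>w1\<in>W. \<Sum>w2\<in>W. ?c y1 w1 y2 w2) \<le> real (card ?V) * real (card W)"
        by (rule bad_bound[OF y1V y2V W finW])
      moreover have "0 \<le> real (card W) ^ 2 * real (card (carrier R)) ^ (d - 1)" by simp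
      ultimately show ?thesis unfolding if_P[OF True] by linarith
    next
      case False
      then obtain i0 where i0: "i0 < d" "y1 i0 \<ominus> y2 i0 \<notin> M" by auto
      have "(\<Sum>w1\<in>W. \<Sum>w2\<in>W. ?c y1 w1 y2 w2) \<le> (\<Sum>w1\<in>W. \<Sum>w2\<in>W. real (card (carrier R)) ^ (d - 1))"
      proof (intro sum_mono)
        fix w1 w2 assume "w1 \<in> W" "w2 \<in> W"
        then have "card {x \<in> ?V. ee d x y1 w1 = ee d x y2 w2} \<le> card (carrier R) ^ (d - 1)"
          using good_bound[OF y1V y2V _ _ i0] W by auto
        then have "real (card {x \<in> ?V. ee d x y1 w1 = ee d x y2 w2}) \<le> real (card (carrier R) ^ (d - 1))"
          by (simp only: of_nat_le_iff)
        then show "?c y1 w1 y2 w2 \<le> real (card (carrier R)) ^ (d - 1)" by simp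
      qed
      also have "\<dots> = real (card W) ^ 2 * real (card (carrier R)) ^ (d - 1)"
        by (simp add: power2_eq_square)
      finally have "(\<Sum>w1\<in>W. \<Sum>w2\<in>W. ?c y1 w1 y2 w2) \<le> real (card W) ^ 2 * real (card (carrier R)) ^ (d - 1)" .
      then show ?thesis unfolding if_not_P[OF False] by simp
    qed
  qed
  also have "\<dots> = real (card Y) ^ 2 * real (card W) ^ 2 * real (card (carrier R)) ^ (d - 1)
      + real (card ?V) * real (card W) * (\<Sum>y1\<in>Y. real (card {y2 \<in> Y. ?bad y1 y2}))"
  proof -
    have inner: "(\<Sum>y2\<in>Y. (if ?bad y1 y2 then real (card ?V) * real (card W) else 0))
        = real (card ?V) * real (card W) * real (card {y2 \<in> Y. ?bad y1 y2})" for y1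
      using finY by (simp add: sum.inter_filter[symmetric])
    show ?thesis
      by (simp add: sum.distrib inner sum_distrib_left power2_eq_square)
  qed
  also have "\<dots> \<le> real (card Y) ^ 2 * real (card W) ^ 2 * real (card (carrier R)) ^ (d - 1)
      + real (card ?V) * real (card W) * (\<Sum>y1\<in>Y. real (card M) ^ d)"
  proof -
    have "(\<Sum>y1\<in>Y. real (card {y2 \<in> Y. ?bad y1 y2})) \<le> (\<Sum>y1\<in>Y. real (card M) ^ d)"
    proof (intro sum_mono)
      fix y1 assume "y1 \<in> Y"
      then have "card {y2 \<in> Y. ?bad y1 y2} \<le> card M ^ d" using badcount Y by auto
      then have "real (card {y2 \<in> Y. ?bad y1 y2}) \<le> real (card M ^ d)"
        by (simp only: of_nat_le_iff)
      then show "real (card {y2 \<in> Y. ?bad y1 y2}) \<le> real (card M) ^ d" by simp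
    qed
    then show ?thesis by (intro add_left_mono mult_left_mono) auto
  qed
  also have "\<dots> = real (card Y) ^ 2 * real (card W) ^ 2 * real (card (carrier R)) ^ (d - 1)
      + real (card Y) * real (card M) ^ d * real (card ?V) * real (card W)"
    by simp
  finally show ?thesis .
qed

end

context fvr2 begin

lemma SS_sub: "A \<subseteq> carrier R \<Longrightarrow> ring_sumset R A \<subseteq> carrier R"
  unfolding ring_sumset_def by auto

lemma T_sub: assumes "A \<subseteq> carrier R" shows "sq_sumset R n A \<subseteq> carrier R"
proof
  fix t assume "t \<in> sq_sumset R n A"
  then obtain f where f: "f \<in> {..<n} \<rightarrow> A" "t = finsum R (\<lambda>i. f i \<otimes> f i) {..<n}"
    unfolding sq_sumset_def by auto
  have "(\<lambda>i. f i \<otimes> f i) \<in> {..<n} \<rightarrow> carrier R" using f(1) assms by (auto simp: Pi_def)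
  then show "t \<in> carrier R" using f(2) finsum_closed by simp
qed

lemma lowerx:
  assumes A: "A \<subseteq> carrier R" and y: "y \<in> Vd d A" and b: "b \<in> A"
  shows "card A ^ d \<le> card {x \<in> Vd d (ring_sumset R A). ee d x y (b \<otimes> b) \<in> sq_sumset R (Suc d) A}"
proof -
  let ?g = "\<lambda>a. restrict (\<lambda>i. y i \<oplus> a i) {..<d}"
  let ?S = "{x \<in> Vd d (ring_sumset R A). ee d x y (b \<otimes> b) \<in> sq_sumset R (Suc d) A}"
  have yc: "\<And>i. i < d \<Longrightarrow> y i \<in> carrier R" using y A unfolding Vd_def by auto
  have bc: "b \<in> carrier R" using b A by auto
  have finSS: "finite (ring_sumset R A)" using finite_subset[OF SS_sub[OF A] fin] .
  have finS: "finite ?S" using Vd_fin[OF finSS] by simp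
  have inj: "inj_on ?g (Vd d A)"
  proof (rule inj_onI)
    fix a a' assume a: "a \<in> Vd d A" and a': "a' \<in> Vd d A" and e: "?g a = ?g a'"
    have "a i = a' i" if i: "i \<in> {..<d}" for i
    proof -
      have "?g a i = ?g a' i" using e by simp
      then have "y i \<oplus> a i = y i \<oplus> a' i" using i by simp
      moreover have "a i \<in> carrier R" "a' i \<in> carrier R" using a a' A i unfolding Vd_def by auto
      ultimately show ?thesis using add_lcancel' yc i by auto
    qed
    then show "a = a'" by (intro PiE_ext[OF a[unfolded Vd_def] a'[unfolded Vd_def]]) auto
  qed
  have img: "?g ` Vd d A \<subseteq> ?S"
  proof (rule image_subsetI)
    fix a assume a: "a \<in> Vd d A"
    have ac: "\<And>i. i < d \<Longrightarrow> a i \<in> carrier R" and aA: "\<And>i. i < d \<Longrightarrow> a i \<in> A"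
      using a A unfolding Vd_def by auto
    have yA: "\<And>i. i < d \<Longrightarrow> y i \<in> A" using y unfolding Vd_def by auto
    have inX: "?g a \<in> Vd d (ring_sumset R A)"
      unfolding Vd_def restrict_PiE_iff ring_sumset_def using yA aA by blast
    have Qeq: "Qf d (\<lambda>i. ?g a i \<ominus> y i) = Qf d a"
      unfolding Qf_def
    proof (rule finsum_cong')
      show "(\<lambda>i. a i \<otimes> a i) \<in> {..<d} \<rightarrow> carrier R" using ac by auto
      fix i assume i: "i \<in> {..<d}"
      have "y i \<oplus> a i \<ominus> y i = a i" using yc[of i] ac[of i] i by simp algebra
      then show "(?g a i \<ominus> y i) \<otimes> (?g a i \<ominus> y i) = a i \<otimes> a i" using i by simp
    qed simp
    define f where "f i = (if i < d then a i else b)" for i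
    have fA: "f \<in> {..<Suc d} \<rightarrow> A" unfolding f_def using aA b by auto
    have "finsum R (\<lambda>i. f i \<otimes> f i) {..<Suc d} = f d \<otimes> f d \<oplus> finsum R (\<lambda>i. f i \<otimes> f i) {..<d}"
    proof -
      have fc: "\<And>i. i < Suc d \<Longrightarrow> f i \<in> carrier R" using fA A by auto
      show ?thesis unfolding lessThan_Suc by (intro finsum_insert) (auto simp: Pi_def fc)
    qed
    also have "finsum R (\<lambda>i. f i \<otimes> f i) {..<d} = Qf d a"
      unfolding Qf_def by (rule finsum_cong') (auto simp: f_def ac)
    also have "f d \<otimes> f d = b \<otimes> b" unfolding f_def by simp
    finally have "finsum R (\<lambda>i. f i \<otimes> f i) {..<Suc d} = b \<otimes> b \<oplus> Qf d a" .
    moreover have "Qf d a \<in> carrier R" using ac by (intro Qf_closed) auto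
    ultimately have "ee d (?g a) y (b \<otimes> b) = finsum R (\<lambda>i. f i \<otimes> f i) {..<Suc d}"
      unfolding ee_def Qeq using bc by (simp add: a_comm)
    then have "ee d (?g a) y (b \<otimes> b) \<in> sq_sumset R (Suc d) A"
      unfolding sq_sumset_def using fA by blast
    then show "?g a \<in> ?S" using inX by simp
  qed
  have "card A ^ d = card (Vd d A)" using Vd_card finite_subset[OF A fin] by simp
  also have "\<dots> = card (?g ` Vd d A)" using card_image[OF inj] by simp
  also have "\<dots> \<le> card ?S" by (rule card_mono[OF finS img])
  finally show ?thesis .
qed

end

context fvr2 begin

lemma main_ineq:
  assumes A: "A \<subseteq> carrier R" and d: "d \<ge> 1"
  shows "real (card A) ^ (2 * d) * real (card ((\<lambda>a. a \<otimes> a) ` A)) \<le>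
    real (card (ring_sumset R A)) ^ d * real (card (sq_sumset R (Suc d) A)) * real (card A) ^ d
      * real (card ((\<lambda>a. a \<otimes> a) ` A)) / real (card (carrier R))
    + sqrt (real (card (ring_sumset R A)) ^ d * real (card (sq_sumset R (Suc d) A)) * real (card A) ^ d
      * real (card ((\<lambda>a. a \<otimes> a) ` A)) * real (card M) ^ d * real (card (carrier R)) ^ d)"
proof -
  define SS where "SS = ring_sumset R A"
  define W where "W = (\<lambda>a. a \<otimes> a) ` A"
  define T where "T = sq_sumset R (Suc d) A"
  define V where "V = Vd d (carrier R)"
  define YY where "YY = Vd d A"
  define XX where "XX = Vd d SS"
  define P where "P = YY \<times> W"
  define e where "e x p = ee d x (fst p) (snd p)" for x p
  define phi where "phi x t = (\<Sum>p\<in>P. if e x p = t then 1 else 0 :: real)" for x t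
  define f where "f = (\<lambda>(x, t). phi x t)"
  define D where "D = V \<times> carrier R"
  define S where "S = XX \<times> T"
  have finA: "finite A" using finite_subset[OF A fin] .
  have SSsub: "SS \<subseteq> carrier R" unfolding SS_def using SS_sub[OF A] .
  have Tsub: "T \<subseteq> carrier R" unfolding T_def using T_sub[OF A] .
  have Wsub: "W \<subseteq> carrier R" unfolding W_def using A by auto
  have finSS: "finite SS" using finite_subset[OF SSsub fin] .
  have finT: "finite T" using finite_subset[OF Tsub fin] .
  have finW: "finite W" using finite_subset[OF Wsub fin] .
  have finV: "finite V" unfolding V_def using Vd_fin fin by simp
  have finY: "finite YY" unfolding YY_def using Vd_fin finA by simp
  have finX: "finite XX" unfolding XX_def using Vd_fin finSS by simp
  have finP: "finite P" unfolding P_def using finY finW by simp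
  have YV: "YY \<subseteq> V" unfolding YY_def V_def Vd_def using A by (auto simp: PiE_iff)
  have XV: "XX \<subseteq> V" unfolding XX_def V_def Vd_def using SSsub by (auto simp: PiE_iff)
  have eU: "e x p \<in> carrier R" if "x \<in> V" "p \<in> P" for x p
    using that YV Wsub unfolding e_def P_def V_def by (auto intro!: ee_closed)
  have ps1: "(\<Sum>x\<in>V. \<Sum>t\<in>carrier R. phi x t) = card V * card P"
    unfolding phi_def by (rule phi_sums(1)[OF finV fin finP eU])
  have ps2: "(\<Sum>x\<in>V. \<Sum>t\<in>carrier R. (phi x t)^2) = (\<Sum>p1\<in>P. \<Sum>p2\<in>P. real (card {x\<in>V. e x p1 = e x p2}))"
    unfolding phi_def by (rule phi_sums(2)[OF finV fin finP eU])
  have sumD: "sum f D = (\<Sum>x\<in>V. \<Sum>t\<in>carrier R. phi x t)"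
    unfolding D_def f_def by (simp add: sum.cartesian_product)
  have sumD2: "(\<Sum>z\<in>D. (f z)^2) = (\<Sum>x\<in>V. \<Sum>t\<in>carrier R. (phi x t)^2)"
    unfolding D_def f_def by (simp add: sum.cartesian_product split_def)
  have sumS: "sum f S = (\<Sum>x\<in>XX. \<Sum>t\<in>T. phi x t)"
    unfolding S_def f_def by (simp add: sum.cartesian_product)
  have cardD: "card D = card V * card (carrier R)" unfolding D_def by (simp add: card_cartesian_product)
  have cardS: "card S = card XX * card T" unfolding S_def by (simp add: card_cartesian_product)
  have cardP: "card P = card YY * card W" unfolding P_def by (simp add: card_cartesian_product)
  have cardV: "card V = card (carrier R) ^ d" unfolding V_def using Vd_card fin by simp
  have cardY: "card YY = card A ^ d" unfolding YY_def using Vd_card finA by simp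
  have cardXX: "card XX = card SS ^ d" unfolding XX_def using Vd_card finSS by simp
  have Rpos: "card (carrier R) > 0" using fin by (auto simp: card_gt_0_iff)
  have Vpos: "card V > 0" using cardV Rpos by simp
  have Dne: "D \<noteq> {}" using cardD Vpos Rpos by auto
  have finD: "finite D" unfolding D_def using finV fin by simp
  have SD: "S \<subseteq> D" unfolding S_def D_def using XV Tsub by auto
  have cs: "sum f S \<le> card S * (sum f D / card D) + sqrt (card S * ((\<Sum>z\<in>D. (f z)^2) - (sum f D)^2 / card D))"
    by (rule cs_main[OF finD SD Dne])
  have P2: "(\<Sum>p1\<in>P. \<Sum>p2\<in>P. real (card {x\<in>V. e x p1 = e x p2}))
     \<le> real (card YY) ^ 2 * real (card W) ^ 2 * real (card (carrier R)) ^ (d - 1)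
      + real (card YY) * real (card M) ^ d * real (card V) * real (card W)"
    unfolding P_def e_def V_def using sumP2[OF _ Wsub d] YV unfolding V_def by blast
  have mean: "sum f D / card D = real (card P) / real (card (carrier R))"
    using sumD ps1 cardD Vpos by simp
  have sq: "(sum f D)^2 / card D = real (card YY) ^ 2 * real (card W) ^ 2 * real (card (carrier R)) ^ (d - 1)"
  proof -
    have "(sum f D)^2 / card D = real (card V) * real (card P)^2 / real (card (carrier R))"
      using sumD ps1 cardD Vpos Rpos by (simp add: power2_eq_square)
    also have "\<dots> = real (card (carrier R)) ^ (d - 1) * real (card P)^2"
    proof -
      have "real (card V) = real (card (carrier R)) * real (card (carrier R)) ^ (d - 1)"
        using cardV d by (metis of_nat_mult of_nat_power power_eq_if Suc_diff_1 less_le_trans zero_less_one power_Suc)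
      then show ?thesis using Rpos by simp
    qed
    finally show ?thesis using cardP by (simp add: power_mult_distrib)
  qed
  have var: "(\<Sum>z\<in>D. (f z)^2) - (sum f D)^2 / card D \<le> real (card YY) * real (card M) ^ d * real (card V) * real (card W)"
    using P2 sumD2 ps2 sq by linarith
  have up: "sum f S \<le> card S * (real (card P) / real (card (carrier R)))
      + sqrt (card S * (real (card YY) * real (card M) ^ d * real (card V) * real (card W)))"
  proof -
    have "sqrt (card S * ((\<Sum>z\<in>D. (f z)^2) - (sum f D)^2 / card D))
        \<le> sqrt (card S * (real (card YY) * real (card M) ^ d * real (card V) * real (card W)))"
    proof -
      have m1: "card S * ((\<Sum>z\<in>D. (f z)^2) - (sum f D)^2 / card D)
         \<le> card S * (real (card YY) * real (card M) ^ d * real (card V) * real (card W))"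
        by (rule mult_left_mono[OF var]) simp
      show ?thesis by (rule real_sqrt_le_mono[OF m1])
    qed
    moreover note cs[unfolded mean]
    ultimately show ?thesis by linarith
  qed
  have low1: "(\<Sum>x\<in>XX. \<Sum>t\<in>T. phi x t) = (\<Sum>p\<in>P. real (card {x \<in> XX. e x p \<in> T}))"
  proof -
    have "(\<Sum>x\<in>XX. \<Sum>t\<in>T. phi x t) = (\<Sum>x\<in>XX. \<Sum>p\<in>P. \<Sum>t\<in>T. if e x p = t then 1 else 0 :: real)"
      unfolding phi_def by (simp add: sum.swap[of _ T P])
    also have "\<dots> = (\<Sum>x\<in>XX. \<Sum>p\<in>P. if e x p \<in> T then 1 else 0 :: real)"
      using finT by (simp add: sum.delta)
    also have "\<dots> = (\<Sum>p\<in>P. \<Sum>x\<in>XX. if e x p \<in> T then 1 else 0 :: real)"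
      by (rule sum.swap)
    also have "\<dots> = (\<Sum>p\<in>P. real (card {x \<in> XX. e x p \<in> T}))"
      using finX by (simp add: sum.inter_filter[symmetric])
    finally show ?thesis .
  qed
  have low2: "real (card A) ^ d \<le> real (card {x \<in> XX. e x p \<in> T})" if p: "p \<in> P" for p
  proof -
    obtain y w where pw: "p = (y, w)" "y \<in> YY" "w \<in> W" using p unfolding P_def by auto
    obtain b where b: "b \<in> A" "w = b \<otimes> b" using pw unfolding W_def by auto
    have "card A ^ d \<le> card {x \<in> XX. e x p \<in> T}"
      using lowerx[OF A pw(2)[unfolded YY_def] b(1)] unfolding XX_def SS_def e_def T_def pw b by simp
    then have "real (card A ^ d) \<le> real (card {x \<in> XX. e x p \<in> T})" by (simp only: of_nat_le_iff)
    then show ?thesis by simp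
  qed
  have low: "real (card P) * real (card A) ^ d \<le> sum f S"
  proof -
    have "(\<Sum>p\<in>P. real (card A) ^ d) \<le> (\<Sum>p\<in>P. real (card {x \<in> XX. e x p \<in> T}))"
      by (rule sum_mono) (rule low2)
    then show ?thesis using sumS low1 by (simp add: mult.commute)
  qed
  have final: "real (card P) * real (card A) ^ d \<le> card S * (real (card P) / real (card (carrier R)))
      + sqrt (card S * (real (card YY) * real (card M) ^ d * real (card V) * real (card W)))"
    using low up by linarith
  have e2: "real (card A) ^ (2 * d) = real (card A) ^ d * real (card A) ^ d"
    by (simp add: power_add[symmetric] mult_2)
  show ?thesis
    using final unfolding e2 cardP cardS cardY cardXX cardV SS_def[symmetric] W_def[symmetric] T_def[symmetric]
    by (simp add: algebra_simps)
qed

end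

context fvr2 begin

lemma sq_fiber:
  assumes c: "x \<in> carrier R" "y \<in> carrier R" and nm: "x \<notin> M" "y \<notin> M" and e: "x \<otimes> x = y \<otimes> y"
  shows "y = x \<or> y = \<ominus> x"
proof -
  have xu: "x \<in> Units R" using notM_unit c nm by simp
  have p0: "(x \<ominus> y) \<otimes> (x \<oplus> y) = x \<otimes> x \<ominus> y \<otimes> y" using c by algebra
  then have p: "(x \<ominus> y) \<otimes> (x \<oplus> y) = \<zero>" using e c by (simp add: r_neg)
  have Msub: "additive_subgroup M R" using ideal.axioms(1)[OF M_ideal] .
  show ?thesis
  proof (cases "x \<ominus> y \<in> M")
    case True
    have "x \<oplus> y \<notin> M"
    proof
      assume "x \<oplus> y \<in> M"
      then have "(x \<ominus> y) \<oplus> (x \<oplus> y) \<in> M" using True additive_subgroup.a_closed[OF Msub] by blast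
      moreover have "(x \<ominus> y) \<oplus> (x \<oplus> y) = (\<one> \<oplus> \<one>) \<otimes> x" using c by algebra
      moreover have "(\<one> \<oplus> \<one>) \<otimes> x \<in> Units R" using tu xu by simp
      ultimately show False using unit_notin_M by simp
    qed
    then have "x \<oplus> y \<in> Units R" using notM_unit c by simp
    moreover have "(x \<oplus> y) \<otimes> (x \<ominus> y) = \<zero>" using p c m_comm by simp
    ultimately have "x \<ominus> y = \<zero>" using unit_cancel_zero c by simp
    moreover have "y = x \<ominus> (x \<ominus> y)" using c by algebra
    ultimately show ?thesis using c by simp
  next
    case False
    then have "x \<ominus> y \<in> Units R" using notM_unit c by simp
    then have xy0: "x \<oplus> y = \<zero>" using unit_cancel_zero p c by simp
    have "y = (x \<oplus> y) \<ominus> x" using c by algebra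
    also have "\<dots> = \<zero> \<ominus> x" using xy0 by simp
    also have "\<dots> = \<ominus> x" using c by algebra
    finally show ?thesis by simp
  qed
qed

lemma sq_card:
  assumes A: "A \<subseteq> carrier R"
  shows "card A \<le> card M + 2 * card ((\<lambda>a. a \<otimes> a) ` A)"
proof -
  let ?sq = "\<lambda>a. a \<otimes> a"
  define AU where "AU = A - M"
  define W' where "W' = ?sq ` AU"
  define g where "g = inv_into AU ?sq"
  have finA: "finite A" using finite_subset[OF A fin] .
  have finW': "finite W'" unfolding W'_def AU_def using finA by simp
  have cover: "AU \<subseteq> g ` W' \<union> (\<lambda>w. \<ominus> g w) ` W'"
  proof
    fix x assume x: "x \<in> AU"
    let ?w = "?sq x"
    have w: "?w \<in> W'" unfolding W'_def using x by auto
    have gin: "g ?w \<in> AU" unfolding g_def using x by (simp add: inv_into_into)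
    have wi: "?w \<in> ?sq ` AU" using x by (rule imageI)
    have gsq: "?sq (g ?w) = ?w" unfolding g_def by (rule f_inv_into_f[OF wi])
    have xc: "x \<in> carrier R" "x \<notin> M" using x A unfolding AU_def by auto
    have gc: "g ?w \<in> carrier R" "g ?w \<notin> M" using gin A unfolding AU_def by auto
    have "x = g ?w \<or> x = \<ominus> g ?w" using sq_fiber[OF gc(1) xc(1) gc(2) xc(2)] gsq by simp
    then show "x \<in> g ` W' \<union> (\<lambda>w. \<ominus> g w) ` W'" using w by auto
  qed
  have "card AU \<le> card (g ` W' \<union> (\<lambda>w. \<ominus> g w) ` W')"
    by (rule card_mono[OF _ cover]) (use finW' in simp)
  also have "\<dots> \<le> card (g ` W') + card ((\<lambda>w. \<ominus> g w) ` W')" by (rule card_Un_le)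
  also have "\<dots> \<le> card W' + card W'" by (intro add_mono card_image_le finW')
  also have "card W' \<le> card (?sq ` A)" unfolding W'_def AU_def
    by (rule card_mono) (use finA in auto)
  finally have AU2: "card AU \<le> 2 * card (?sq ` A)" by simp
  have "A \<subseteq> AU \<union> M" unfolding AU_def by auto
  then have "card A \<le> card (AU \<union> M)" by (rule card_mono[rotated]) (use finA finite_subset[OF M_sub fin] AU_def in simp)
  also have "\<dots> \<le> card AU + card M" by (rule card_Un_le)
  finally show ?thesis using AU2 by simp
qed

end

lemma pw: fixes q x :: real assumes "q > 0" "n > 0" shows "(q powr (x / real n))^n = q powr x"
proof -
  have "(q powr (x / real n))^n = (q powr (x / real n)) powr (real n)"
    using assms by (simp add: powr_realpow)
  also have "\<dots> = q powr x" using assms by (simp add: powr_powr)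
  finally show ?thesis .
qed

lemma final_real:
  fixes a s m om q :: real and d r :: nat
  assumes d: "d \<ge> 1" and r: "r \<ge> 1" and q: "q > 0" and a: "a > 0" and s: "s \<ge> 0" and m: "m \<ge> 0"
    and om: "om \<ge> a / 4"
    and main: "a^(2*d) * om \<le> s^d * m * a^d * om / q^r + sqrt (s^d * m * a^d * om * (q^(r-1))^d * (q^r)^d)"
  shows "(1/16) * min (q powr (real r / real (Suc d)) * a powr ((real (Suc d) - 1) / real (Suc d)))
            (a powr ((3 * real (Suc d) - 2) / real (Suc d)) / q powr ((real (Suc d) - 1) * (2 * real r - 1) / real (Suc d)))
         \<le> max m s"
proof -
  define n where "n = Suc d"
  define Mx where "Mx = max m s"
  define T1 where "T1 = q powr (real r / real n) * a powr ((real n - 1) / real n)"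
  define T2 where "T2 = a powr ((3 * real n - 2) / real n) / q powr ((real n - 1) * (2 * real r - 1) / real n)"
  have Mx0: "Mx \<ge> 0" unfolding Mx_def using m by simp
  have omp: "om > 0" using om a by linarith
  have hM: "s^d * m \<le> Mx ^ n"
  proof -
    have "s^d \<le> Mx^d" unfolding Mx_def by (rule power_mono) (use s in auto)
    moreover have "m \<le> Mx" unfolding Mx_def by simp
    ultimately have "s^d * m \<le> Mx^d * Mx" by (intro mult_mono) (use s m Mx0 in auto)
    then show ?thesis unfolding n_def by (simp add: mult.commute)
  qed
  have npos: "n > 0" unfolding n_def by simp
  have T1n: "T1 ^ n = q^r * a^d"
  proof -
    have "T1 ^ n = (q powr (real r / real n))^n * (a powr ((real n - 1) / real n))^n"
      unfolding T1_def by (simp add: power_mult_distrib)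
    also have "\<dots> = q powr (real r) * a powr (real n - 1)" using pw q a npos by simp
    also have "real n - 1 = real d" unfolding n_def by simp
    finally show ?thesis using q a by (simp add: powr_realpow)
  qed
  have T2n: "T2 ^ n = a^(3*d+1) / q^((2*r-1)*d)"
  proof -
    have "T2 ^ n = (a powr ((3 * real n - 2) / real n))^n / (q powr ((real n - 1) * (2 * real r - 1) / real n))^n"
      unfolding T2_def by (simp add: power_divide)
    also have "\<dots> = a powr (3 * real n - 2) / q powr ((real n - 1) * (2 * real r - 1))" using pw q a npos by simp
    also have "3 * real n - 2 = real (3*d+1)" unfolding n_def by simp
    also have "(real n - 1) * (2 * real r - 1) = real ((2*r-1)*d)" unfolding n_def using r by (simp add: of_nat_diff)
    also have "a powr real (3*d+1) / q powr real ((2*r-1)*d) = a^(3*d+1) / q^((2*r-1)*d)"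
      by (simp only: powr_realpow[OF a] powr_realpow[OF q])
    finally show ?thesis .
  qed
  have T1p: "T1 \<ge> 0" and T2p: "T2 \<ge> 0" unfolding T1_def T2_def by auto
  define F where "F = s^d * m * a^d * om / q^r"
  define G where "G = sqrt (s^d * m * a^d * om * (q^(r-1))^d * (q^r)^d)"
  have mainFG: "a^(2*d) * om \<le> F + G" using main unfolding F_def G_def .
  have ad: "a^d > 0" using a by simp
  have a2d: "a^(2*d) = a^d * a^d" by (simp add: mult_2 power_add)
  have key: "T1 \<le> 16 * Mx \<or> T2 \<le> 16 * Mx"
  proof (cases "G \<le> F")
    case True
    then have "a^(2*d) * om \<le> 2 * F" using mainFG by linarith
    then have "a^d * a^d * om * q^r \<le> 2 * (s^d * m) * a^d * om" unfolding F_def a2d using q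
      by (simp add: field_simps)
    then have "(a^d * q^r) * (a^d * om) \<le> (2 * (s^d * m)) * (a^d * om)" by (simp add: algebra_simps)
    then have "a^d * q^r \<le> 2 * (s^d * m)" using ad omp by (simp add: mult_le_cancel_right_pos)
    also have "\<dots> \<le> 2 * Mx^n" using hM by simp
    also have "\<dots> \<le> (16 * Mx)^n" using Mx0 npos
    proof -
      have "(16::real)^1 \<le> 16^n" by (rule power_increasing) (use npos in auto)
      then have "(16::real)^n \<ge> 2" by simp
      then show ?thesis by (simp add: power_mult_distrib mult_right_mono Mx0)
    qed
    finally have "T1^n \<le> (16 * Mx)^n" using T1n by (simp add: mult.commute)
    then have "T1 \<le> 16 * Mx" using Mx0 npos power_le_imp_le_base[of T1 "n - 1" "16 * Mx"] by simp
    then show ?thesis by simp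
  next
    case False
    then have "a^(2*d) * om \<le> 2 * G" using mainFG by linarith
    then have "(a^(2*d) * om)^2 \<le> (2 * G)^2" using a omp by (intro power_mono) auto
    also have "\<dots> = 4 * (s^d * m * a^d * om * (q^(r-1))^d * (q^r)^d)"
      unfolding G_def power_mult_distrib using s m a omp q by simp
    finally have "(a^d * om) * (a^d * a^d * a^d * om) \<le> (a^d * om) * (4 * (s^d * m) * (q^(r-1))^d * (q^r)^d)"
      unfolding a2d by (simp add: power2_eq_square algebra_simps)
    then have h1: "a^d * a^d * a^d * om \<le> 4 * (s^d * m) * (q^(r-1))^d * (q^r)^d"
      using ad omp by (simp add: mult_le_cancel_left_pos)
    have qq: "(q^(r-1))^d * (q^r)^d = q^((2*r-1)*d)"
    proof -
      have "(q^(r-1))^d * (q^r)^d = (q^(r-1+r))^d" by (simp add: power_add power_mult_distrib)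
      also have "r - 1 + r = 2*r-1" using r by simp
      finally show ?thesis by (simp only: power_mult)
    qed
    have e3: "3*d+1 = d+d+d+1" by simp
    have "a^(3*d+1) = a^d * a^d * a^d * a" unfolding e3 by (simp add: power_add)
    also have "\<dots> = 4 * (a^d * a^d * a^d * (a / 4))" by simp
    finally have "a^(3*d+1) = 4 * (a^d * a^d * a^d * (a / 4))" .
    then have "a^(3*d+1) = 4 * (a^d * a^d * a^d * (a / 4))" .
    also have "\<dots> \<le> 4 * (a^d * a^d * a^d * om)" using om ad by simp
    also have "\<dots> \<le> 16 * (s^d * m) * (q^(r-1))^d * (q^r)^d" using h1 by (simp add: algebra_simps)
    also have "\<dots> \<le> 16 * Mx^n * (q^(r-1))^d * (q^r)^d" using hM q by simp
    also have "16 * Mx^n * (q^(r-1))^d * (q^r)^d = 16 * Mx^n * q^((2*r-1)*d)" using qq by (simp add: mult.assoc)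
    finally have "a^(3*d+1) \<le> 16 * Mx^n * q^((2*r-1)*d)" .
    then have "T2^n \<le> 16 * Mx^n" unfolding T2n using q by (simp add: divide_le_eq)
    also have "\<dots> \<le> (16 * Mx)^n"
    proof -
      have "(16::real)^1 \<le> 16^n" by (rule power_increasing) (use npos in auto)
      then have "(16::real) \<le> 16^n" by simp
      then show ?thesis by (simp add: power_mult_distrib mult_right_mono Mx0)
    qed
    finally have "T2 \<le> 16 * Mx" using Mx0 npos power_le_imp_le_base[of T2 "n - 1" "16 * Mx"] by simp
    then show ?thesis by simp
  qed
  have "(1/16) * min T1 T2 \<le> Mx" using key T1p T2p by auto
  then show ?thesis unfolding T1_def T2_def Mx_def n_def .
qed


theorem theorem1p7:
  fixes n :: nat
  assumes "n > 1"
  shows "\<exists>C::real. C > 0 \<and>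
    (\<forall>(R :: ('a, 'b) ring_scheme) M z q r A.
       finite_valuation_ring R \<longrightarrow>
       maximalideal M R \<longrightarrow> z \<in> carrier R \<longrightarrow> M = PIdl\<^bsub>R\<^esub> z \<longrightarrow>
       q = card (carrier (R Quot M)) \<longrightarrow>
       r = (LEAST k::nat. k > 0 \<and> z [^]\<^bsub>R\<^esub> k = \<zero>\<^bsub>R\<^esub>) \<longrightarrow>
       (\<exists>p k. Factorial_Ring.prime (p::nat) \<and> odd p \<and> k > 0 \<and> q = p ^ k) \<longrightarrow>
       A \<subseteq> carrier R \<longrightarrow> real (card A) \<ge> 2 * real q ^ (r - 1) \<longrightarrow>
       max (real (card (sq_sumset R n A))) (real (card (ring_sumset R A)))
         \<ge> C * min (real q powr (real r / real n) * real (card A) powr ((real n - 1) / real n))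
                    (real (card A) powr ((3 * real n - 2) / real n)
                       / real q powr ((real n - 1) * (2 * real r - 1) / real n)))"
proof (rule exI[of _ "1/16"], intro conjI allI impI)
  show "(0::real) < 1/16" by simp
  fix R :: "('a, 'b) ring_scheme" and M z q r A
  assume fvrR: "finite_valuation_ring R" and Mmax: "maximalideal M R" and zc: "z \<in> carrier R"
    and Mz: "M = PIdl\<^bsub>R\<^esub> z" and qdef: "q = card (carrier (R Quot M))"
    and rdef: "r = (LEAST k::nat. k > 0 \<and> z [^]\<^bsub>R\<^esub> k = \<zero>\<^bsub>R\<^esub>)"
    and qodd: "\<exists>p k. Factorial_Ring.prime (p::nat) \<and> odd p \<and> k > 0 \<and> q = p ^ k"
    and A: "A \<subseteq> carrier R" and Abig: "real (card A) \<ge> 2 * real q ^ (r - 1)"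
  have cr: "cring R" and fin: "finite (carrier R)" and ex1: "\<exists>!M. maximalideal M R"
    using fvrR unfolding finite_valuation_ring_def by auto
  have Muniq: "\<And>M'. maximalideal M' R \<Longrightarrow> M' = M" using ex1 Mmax by blast
  interpret F: fvr R M z
    by (rule fvr.intro[OF cr]) (rule fvr_axioms.intro[OF fin Mmax Muniq zc Mz])
  have oq: "odd q"
  proof -
    obtain p k where pk: "Factorial_Ring.prime (p::nat)" "odd p" "k > 0" "q = p ^ k" using qodd by blast
    then show ?thesis by simp
  qed
  have tu: "\<one>\<^bsub>R\<^esub> \<oplus>\<^bsub>R\<^esub> \<one>\<^bsub>R\<^esub> \<in> Units R" using F.two_unit oq qdef by simp
  interpret G: fvr2 R M z
    by (rule fvr2.intro[OF F.fvr_axioms]) (rule fvr2_axioms.intro[OF tu])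
  have qK: "q = card F.Kz" using F.card_quot qdef by simp
  have rr: "r = F.rr" unfolding rdef F.rr_def ..
  have r1: "r \<ge> 1" using F.rr_prop rr by simp
  have qpos: "q > 0" using F.card_Kz_pos qK by simp
  have cR: "card (carrier R) = q ^ r" using F.card_R qK rr by simp
  have cM: "card M = q ^ (r - 1)" using F.card_M qK rr by simp
  define d where "d = n - 1"
  have d1: "d \<ge> 1" and nd: "n = Suc d" unfolding d_def using assms by auto
  have mi: "real (card A) ^ (2 * d) * real (card ((\<lambda>a. a \<otimes>\<^bsub>R\<^esub> a) ` A)) \<le>
    real (card (ring_sumset R A)) ^ d * real (card (sq_sumset R (Suc d) A)) * real (card A) ^ d
      * real (card ((\<lambda>a. a \<otimes>\<^bsub>R\<^esub> a) ` A)) / real (card (carrier R))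
    + sqrt (real (card (ring_sumset R A)) ^ d * real (card (sq_sumset R (Suc d) A)) * real (card A) ^ d
      * real (card ((\<lambda>a. a \<otimes>\<^bsub>R\<^esub> a) ` A)) * real (card M) ^ d * real (card (carrier R)) ^ d)"
    by (rule G.main_ineq[OF A d1])
  have sqc: "card A \<le> card M + 2 * card ((\<lambda>a. a \<otimes>\<^bsub>R\<^esub> a) ` A)" by (rule G.sq_card[OF A])
  have om: "real (card ((\<lambda>a. a \<otimes>\<^bsub>R\<^esub> a) ` A)) \<ge> real (card A) / 4"
  proof -
    have "real (card A) \<le> real (card M) + 2 * real (card ((\<lambda>a. a \<otimes>\<^bsub>R\<^esub> a) ` A))"
      using sqc by (simp only: of_nat_le_iff[symmetric] of_nat_add of_nat_mult)
    moreover have "real (card M) = real q ^ (r - 1)" using cM by simp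
    ultimately show ?thesis using Abig by linarith
  qed
  have apos: "real (card A) > 0"
  proof -
    have "real q ^ (r - 1) \<ge> 1" using qpos by simp
    then show ?thesis using Abig by linarith
  qed
  have fr: "(1/16) * min (real q powr (real r / real (Suc d)) * real (card A) powr ((real (Suc d) - 1) / real (Suc d)))
            (real (card A) powr ((3 * real (Suc d) - 2) / real (Suc d)) / real q powr ((real (Suc d) - 1) * (2 * real r - 1) / real (Suc d)))
         \<le> max (real (card (sq_sumset R (Suc d) A))) (real (card (ring_sumset R A)))"
  proof (rule final_real[OF d1 r1 _ apos _ _ om])
    show "real q > 0" using qpos by simp
    show "real (card (ring_sumset R A)) \<ge> 0" by simp
    show "real (card (sq_sumset R (Suc d) A)) \<ge> 0" by simp
    show "real (card A) ^ (2 * d) * real (card ((\<lambda>a. a \<otimes>\<^bsub>R\<^esub> a) ` A))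
      \<le> real (card (ring_sumset R A)) ^ d * real (card (sq_sumset R (Suc d) A)) * real (card A) ^ d *
         real (card ((\<lambda>a. a \<otimes>\<^bsub>R\<^esub> a) ` A)) / real q ^ r +
         sqrt (real (card (ring_sumset R A)) ^ d * real (card (sq_sumset R (Suc d) A)) * real (card A) ^ d *
               real (card ((\<lambda>a. a \<otimes>\<^bsub>R\<^esub> a) ` A)) * (real q ^ (r - 1)) ^ d * (real q ^ r) ^ d)"
      using mi unfolding cR cM by simp
  qed
  then show "max (real (card (sq_sumset R n A))) (real (card (ring_sumset R A)))
         \<ge> 1/16 * min (real q powr (real r / real n) * real (card A) powr ((real n - 1) / real n))
                    (real (card A) powr ((3 * real n - 2) / real n)
                       / real q powr ((real n - 1) * (2 * real r - 1) / real n))"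
    unfolding nd by simp
qed


end
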